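(* Let $G$ be a graph with at least one edge and let $x$ be a non-isolated vertex of $G$. Then there exists a Z-Grundy dominating sequence of $G$ that contains $x$.
   Context: For a graph $G$, $N(v)$ is the open neighborhood and $N[v]=N(v)\cup\{v\}$ the closed neighborhood of $v$. A sequence $(v_1,\ldots,v_k)$ of distinct vertices is a Z-sequence if $N(v_i)\setminus\bigcup_{j=1}^{i-1}N[v_j]\neq\emptyset$ for each $i\in[k]$. A Z-Grundy dominating sequence is a Z-sequence of maximum possible length in $G$. *)

theory Defs
  imports Main
begin

definition graph :: "'a set \<Rightarrow> ('a \<Rightarrow> 'a \<Rightarrow> bool) \<Rightarrow> bool" where
  "graph V E \<longleftrightarrow> finite V \<and> (\<forall>u v. E u v \<longrightarrow> u \<in> V \<and> v \<in> V)
     \<and> (\<forall>u v. E u v \<longrightarrow> E v u) \<and> (\<forall>v. \<not> E v v)"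

definition open_nbh :: "'a set \<Rightarrow> ('a \<Rightarrow> 'a \<Rightarrow> bool) \<Rightarrow> 'a \<Rightarrow> 'a set" where
  "open_nbh V E v = {u \<in> V. E v u}"

definition closed_nbh :: "'a set \<Rightarrow> ('a \<Rightarrow> 'a \<Rightarrow> bool) \<Rightarrow> 'a \<Rightarrow> 'a set" where
  "closed_nbh V E v = insert v (open_nbh V E v)"

text \<open>Z-sequence (v_1,...,v_k) as a list; index i < length s corresponds to v_(i+1).\<close>
definition is_Z_sequence :: "'a set \<Rightarrow> ('a \<Rightarrow> 'a \<Rightarrow> bool) \<Rightarrow> 'a list \<Rightarrow> bool" where
  "is_Z_sequence V E s \<longleftrightarrow> distinct s \<and> set s \<subseteq> V \<and>
     (\<forall>i < length s. open_nbh V E (s ! i) - (\<Union>j<i. closed_nbh V E (s ! j)) \<noteq> {})"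

definition is_Z_Grundy_dom_seq :: "'a set \<Rightarrow> ('a \<Rightarrow> 'a \<Rightarrow> bool) \<Rightarrow> 'a list \<Rightarrow> bool" where
  "is_Z_Grundy_dom_seq V E s \<longleftrightarrow> is_Z_sequence V E s \<and>
     (\<forall>t. is_Z_sequence V E t \<longrightarrow> length t \<le> length s)"

end

theory Submission
  imports Defs
begin

definition fp :: "'a set \<Rightarrow> ('a \<Rightarrow> 'a \<Rightarrow> bool) \<Rightarrow> 'a list \<Rightarrow> 'a list \<Rightarrow> bool" where
  "fp V E s fs \<longleftrightarrow> length fs = length s \<and> (\<forall>i<length s. fs!i \<in> open_nbh V E (s!i) \<and>
      (\<forall>j<i. fs!i \<notin> closed_nbh V E (s!j)))"

lemma Z_iff:
  "is_Z_sequence V E s \<longleftrightarrow> distinct s \<and> set s \<subseteq> V \<and> (\<exists>fs. fp V E s fs)"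
proof
  assume a: "is_Z_sequence V E s"
  define fs where "fs = map (\<lambda>i. SOME u. u \<in> open_nbh V E (s ! i) - (\<Union>j<i. closed_nbh V E (s ! j))) [0..<length s]"
  have "fp V E s fs"
    unfolding fp_def
  proof (intro conjI allI impI)
    show "length fs = length s" by (simp add: fs_def)
    fix i assume i: "i < length s"
    have ne: "open_nbh V E (s ! i) - (\<Union>j<i. closed_nbh V E (s ! j)) \<noteq> {}"
      using a i unfolding is_Z_sequence_def by blast
    define X where "X = open_nbh V E (s ! i) - (\<Union>j<i. closed_nbh V E (s ! j))"
    have e: "fs!i = (SOME u. u \<in> X)" unfolding fs_def X_def using i by simp
    have "(SOME u. u \<in> X) \<in> X" using ne unfolding X_def[symmetric] by (simp add: some_in_eq ex_in_conv)
    then have "fs!i \<in> open_nbh V E (s ! i) - (\<Union>j<i. closed_nbh V E (s ! j))"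
      using e X_def by simp
    then show "fs!i \<in> open_nbh V E (s!i)" "\<And>j. j<i \<Longrightarrow> fs!i \<notin> closed_nbh V E (s!j)" by auto
  qed
  then show "distinct s \<and> set s \<subseteq> V \<and> (\<exists>fs. fp V E s fs)" using a unfolding is_Z_sequence_def by blast
next
  assume "distinct s \<and> set s \<subseteq> V \<and> (\<exists>fs. fp V E s fs)"
  then show "is_Z_sequence V E s" unfolding is_Z_sequence_def fp_def by blast
qed

lemma fp_distinct:
  assumes "fp V E s fs" shows "distinct fs"
proof -
  have "fs!i \<noteq> fs!j" if "i < j" "j < length fs" for i j
  proof -
    have "fs!i \<in> closed_nbh V E (s!i)" using assms that unfolding fp_def closed_nbh_def by auto
    moreover have "fs!j \<notin> closed_nbh V E (s!i)" using assms that unfolding fp_def by auto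
    ultimately show ?thesis by auto
  qed
  then show ?thesis unfolding distinct_conv_nth by (metis linorder_neqE_nat)
qed

lemma fp_subset:
  assumes "fp V E s fs" shows "set fs \<subseteq> V"
  using assms unfolding fp_def open_nbh_def by (auto simp: in_set_conv_nth)

lemma fp_rev:
  assumes g: "graph V E" and f: "fp V E s fs" and sV: "set s \<subseteq> V"
  shows "fp V E (rev fs) (rev s)"
  unfolding fp_def
proof (intro conjI allI impI)
  have len: "length fs = length s" using f unfolding fp_def by auto
  then show "length (rev s) = length (rev fs)" by simp
  fix m assume m: "m < length (rev fs)"
  define k where "k = length s"
  have rs: "rev s ! m = s ! (k - 1 - m)" using m len by (simp add: rev_nth k_def)
  have rf: "\<And>j. j < k \<Longrightarrow> rev fs ! j = fs ! (k - 1 - j)" using len by (simp add: rev_nth k_def)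
  have km: "k - 1 - m < length s" using m len k_def by simp
  have A: "fs ! (k-1-m) \<in> open_nbh V E (s ! (k-1-m))" using f km unfolding fp_def by auto
  have sin: "s ! (k-1-m) \<in> V" using sV km by auto
  show "rev s ! m \<in> open_nbh V E (rev fs ! m)"
    using A sin g rs rf[of m] m len k_def unfolding open_nbh_def graph_def by auto
  fix j assume j: "j < m"
  have B: "fs ! (k-1-j) \<notin> closed_nbh V E (s ! (k-1-m))"
  proof -
    have "k-1-j < length s" "k-1-m < k-1-j" using j m len k_def by auto
    then show ?thesis using f unfolding fp_def by blast
  qed
  have fin: "fs ! (k-1-j) \<in> V" using fp_subset[OF f] j m len k_def by auto
  show "rev s ! m \<notin> closed_nbh V E (rev fs ! j)"
    using B fin g rs rf[of j] j m len k_def unfolding closed_nbh_def open_nbh_def graph_def by auto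
qed

lemma fp_append:
  assumes f: "fp V E s fs" and u: "u \<in> open_nbh V E x"
    and nu: "\<forall>j<length s. u \<notin> closed_nbh V E (s!j)"
  shows "fp V E (s@[x]) (fs@[u])"
  unfolding fp_def
proof (intro conjI allI impI)
  have len: "length fs = length s" using f unfolding fp_def by auto
  then show "length (fs@[u]) = length (s@[x])" by simp
  fix i assume i: "i < length (s@[x])"
  show "(fs@[u]) ! i \<in> open_nbh V E ((s@[x]) ! i)"
  proof (cases "i < length s")
    case True then show ?thesis using f len unfolding fp_def by (simp add: nth_append)
  next
    case False then have "i = length s" using i by simp
    then have "(fs@[u]) ! i = u" "(s@[x]) ! i = x" using len by (simp_all add: nth_append)
    then show ?thesis using u by simp
  qed
  fix j assume j: "j < i"
  have js: "j < length s" using j i by simp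
  show "(fs@[u]) ! i \<notin> closed_nbh V E ((s@[x]) ! j)"
  proof (cases "i < length s")
    case True then show ?thesis using f len j js unfolding fp_def by (simp add: nth_append)
  next
    case False then have "i = length s" using i by simp
    then show ?thesis using nu len js by (simp add: nth_append)
  qed
qed

lemma fp_replace:
  assumes f: "fp V E s fs" and t: "t < length s" and u: "u \<in> open_nbh V E x"
    and nu: "\<forall>j<t. u \<notin> closed_nbh V E (s!j)" and xf: "x \<notin> set fs"
    and cov: "open_nbh V E x \<subseteq> (\<Union>j<Suc t. closed_nbh V E (s!j))"
  shows "fp V E (s[t:=x]) (fs[t:=u])"
  unfolding fp_def
proof (intro conjI allI impI)
  have len: "length fs = length s" using f unfolding fp_def by auto
  then show "length (fs[t:=u]) = length (s[t:=x])" by simp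
  fix i assume i: "i < length (s[t:=x])"
  show "fs[t:=u] ! i \<in> open_nbh V E (s[t:=x] ! i)"
    proof (cases "i = t")
    case True then show ?thesis using u i len[symmetric] by simp
  next
    case False then show ?thesis using f i len unfolding fp_def by simp
  qed
  fix j assume j: "j < i"
  show "fs[t:=u] ! i \<notin> closed_nbh V E (s[t:=x] ! j)"
  proof (cases "i = t")
    case True then show ?thesis using nu j t len by simp
  next
    case False
    have fi: "fs[t:=u] ! i = fs ! i" using False by simp
    have nd: "\<forall>j'<i. fs!i \<notin> closed_nbh V E (s!j')" using f i unfolding fp_def by auto
    show ?thesis
    proof (cases "j = t")
      case True
      have "fs ! i \<noteq> x" using xf i len by auto
      moreover have "fs ! i \<notin> open_nbh V E x"
      proof
        assume "fs ! i \<in> open_nbh V E x"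
        then obtain j' where "j' < Suc t" "fs ! i \<in> closed_nbh V E (s!j')" using cov by blast
        then show False using nd True j by auto
      qed
      ultimately show ?thesis using fi True t unfolding closed_nbh_def by simp
    next
      case False
      then show ?thesis using fi nd j by simp
    qed
  qed
qed

theorem proposition3p1:
  fixes V :: "'a set" and E :: "'a \<Rightarrow> 'a \<Rightarrow> bool" and x :: 'a
  assumes "graph V E"
    and "\<exists>u v. E u v"
    and "x \<in> V" and "open_nbh V E x \<noteq> {}"
  shows "\<exists>s. is_Z_Grundy_dom_seq V E s \<and> x \<in> set s"
proof -
  have g: "graph V E" and xV: "x \<in> V" and nx: "open_nbh V E x \<noteq> {}" using assms by auto
  have finV: "finite V" using g unfolding graph_def by auto
  have z0: "is_Z_sequence V E []" unfolding is_Z_sequence_def by simp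
  have bnd: "\<forall>y. is_Z_sequence V E y \<longrightarrow> length y < Suc (card V)"
  proof (intro allI impI)
    fix y assume "is_Z_sequence V E y"
    then have "distinct y" "set y \<subseteq> V" unfolding is_Z_sequence_def by auto
    then have "length y \<le> card V" proof -
      have "card (set y) = length y" using \<open>distinct y\<close> by (rule distinct_card)
      moreover have "card (set y) \<le> card V" using finV \<open>set y \<subseteq> V\<close> by (rule card_mono)
      ultimately show ?thesis by simp
    qed
    then show "length y < Suc (card V)" by simp
  qed
  have "\<exists>s. is_Z_sequence V E s \<and> (\<forall>y. is_Z_sequence V E y \<longrightarrow> length y \<le> length s)"
    by (rule Lattices_Big.ex_has_greatest_nat[OF z0 bnd])
  then obtain s where zs: "is_Z_sequence V E s" and mx: "\<forall>y. is_Z_sequence V E y \<longrightarrow> length y \<le> length s"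
    by blast
  have ds: "distinct s" and sV: "set s \<subseteq> V" using zs unfolding is_Z_sequence_def by auto
  have "\<exists>fs. fp V E s fs" using zs by (simp add: Z_iff)
  then obtain fs where f: "fp V E s fs" by blast
  have len: "length fs = length s" using f unfolding fp_def by auto
  show ?thesis
  proof (cases "x \<in> set s")
    case True then show ?thesis using zs mx unfolding is_Z_Grundy_dom_seq_def by blast
  next
    case xs: False
    show ?thesis
    proof (cases "x \<in> set fs")
      case True
      have "is_Z_sequence V E (rev fs)"
        using Z_iff[of V E "rev fs"] fp_rev[OF g f sV] fp_distinct[OF f] fp_subset[OF f] by auto
      then show ?thesis using True mx len unfolding is_Z_Grundy_dom_seq_def by auto
    next
      case xf: False
      define D where "D = (\<lambda>n. \<Union>j<n. closed_nbh V E (s!j))"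
      have cov: "open_nbh V E x \<subseteq> D (length s)"
      proof (rule ccontr)
        assume "\<not> ?thesis"
        then obtain u where u: "u \<in> open_nbh V E x" "u \<notin> D (length s)" by blast
        have "\<forall>j<length s. u \<notin> closed_nbh V E (s!j)" using u(2) unfolding D_def by blast
        then have "fp V E (s@[x]) (fs@[u])" by (rule fp_append[OF f u(1)])
        moreover have "distinct (s@[x])" using ds xs by simp
        moreover have "set (s@[x]) \<subseteq> V" using sV xV by simp
        ultimately have "is_Z_sequence V E (s@[x])" using Z_iff[of V E "s@[x]"] by blast
        then show False using mx[rule_format, of "s@[x]"] by simp
      qed
      define n where "n = (LEAST n. open_nbh V E x \<subseteq> D n)"
      have nc: "open_nbh V E x \<subseteq> D n" unfolding n_def using cov by (rule LeastI)
      have nle: "n \<le> length s" unfolding n_def using cov by (rule Least_le)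
      have n0: "n \<noteq> 0" using nc nx unfolding D_def by auto
      define t where "t = n - 1"
      have tn: "n = Suc t" using n0 t_def by simp
      have "t < (LEAST n. open_nbh V E x \<subseteq> D n)" using tn n_def by simp
      then have "\<not> open_nbh V E x \<subseteq> D t" by (rule not_less_Least)
      then obtain u where u: "u \<in> open_nbh V E x" "u \<notin> D t" by blast
      have tl: "t < length s" using nle tn by simp
      have "\<forall>j<t. u \<notin> closed_nbh V E (s!j)" using u(2) unfolding D_def by blast
      moreover have "open_nbh V E x \<subseteq> (\<Union>j<Suc t. closed_nbh V E (s!j))" using nc tn unfolding D_def by simp
      ultimately have "fp V E (s[t:=x]) (fs[t:=u])"
        using fp_replace[OF f tl u(1) _ xf] by blast
      moreover have "distinct (s[t:=x])" using ds xs by (simp add: distinct_list_update)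
      moreover have "set (s[t:=x]) \<subseteq> V" using sV xV set_update_subset_insert by fastforce
      ultimately have "is_Z_sequence V E (s[t:=x])" using Z_iff[of V E "s[t:=x]"] by blast
      moreover have "x \<in> set (s[t:=x])" using tl by (simp add: set_update_memI)
      ultimately show ?thesis using mx unfolding is_Z_Grundy_dom_seq_def by auto
    qed
  qed
qed

end
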